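(* Let $p,q$ be coprime positive integers with $p\le q$ and $m$ a positive integer. Let $S=\mathbb C[X_0,\dots,X_4]/(X_0^{q-p}-X_1X_4+X_2X_3)$, graded by $\mathbb Z\times\mathbb Z/m\mathbb Z$ with $X_0$ of degree $(1,0)$, $X_1,X_2$ of degree $(-p,-1)$ and $X_3,X_4$ of degree $(q,1)$, and let $S^{G}=S_{(0,0)}$ be its degree-$(0,0)$ subring. Then (i) $S_{(-p,-1)}=S^{G}X_1+S^{G}X_2$; (ii) $S_{(q,1)}=S^{G}X_3+S^{G}X_4$.
   Context: The grading is the weight grading for the action of $G=G_0\times G_m$ on $\mathbb C^5$ given by $t\cdot(x_0,\dots,x_4)=(tx_0,t^{-p}x_1,t^{-p}x_2,t^qx_3,t^qx_4)$ for $t\in\mathbb C^*$ and $\zeta\cdot(x_0,\dots,x_4)=(x_0,\zeta^{-1}x_1,\zeta^{-1}x_2,\zeta x_3,\zeta x_4)$ for $\zeta\in\mu_m$; $S_{(0,0)}$ is the invariant ring $S^{G}$. *)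

theory Defs
  imports Complex_Main "HOL-Library.Poly_Mapping" "HOL-Number_Theory.Cong"
begin

text \<open>Polynomials in variables X_i (i :: nat) over the complex numbers, as finitely
supported maps from exponent vectors (monomials) to coefficients.
The ring C[X0,...,X4] consists of those polynomials whose monomials only involve
the variables 0..4.\<close>

type_synonym cpoly = "(nat \<Rightarrow>\<^sub>0 nat) \<Rightarrow>\<^sub>0 complex"

definition Xv :: "nat \<Rightarrow> cpoly" where
  "Xv i = Poly_Mapping.single (Poly_Mapping.single i 1) 1"

definition in_ring5 :: "cpoly \<Rightarrow> bool" where
  "in_ring5 f \<longleftrightarrow> (\<forall>\<alpha>\<in>Poly_Mapping.keys f. Poly_Mapping.keys (\<alpha> :: nat \<Rightarrow>\<^sub>0 nat) \<subseteq> {0..<5})"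

definition wdeg :: "nat \<Rightarrow> nat \<Rightarrow> (nat \<Rightarrow>\<^sub>0 nat) \<Rightarrow> int" where
  "wdeg p q \<alpha> = int (Poly_Mapping.lookup \<alpha> 0) - int p * int (Poly_Mapping.lookup \<alpha> 1 + Poly_Mapping.lookup \<alpha> 2)
                 + int q * int (Poly_Mapping.lookup \<alpha> 3 + Poly_Mapping.lookup \<alpha> 4)"

text \<open>Z/mZ-component (represented by an integer, compared mod m): X1,X2 ~ -1, X3,X4 ~ 1.\<close>
definition cdeg :: "(nat \<Rightarrow>\<^sub>0 nat) \<Rightarrow> int" where
  "cdeg \<alpha> = int (Poly_Mapping.lookup \<alpha> 3 + Poly_Mapping.lookup \<alpha> 4) - int (Poly_Mapping.lookup \<alpha> 1 + Poly_Mapping.lookup \<alpha> 2)"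

definition homog :: "nat \<Rightarrow> nat \<Rightarrow> nat \<Rightarrow> int \<times> int \<Rightarrow> cpoly \<Rightarrow> bool" where
  "homog p q m d f \<longleftrightarrow> in_ring5 f \<and>
     (\<forall>\<alpha>\<in>Poly_Mapping.keys f. wdeg p q \<alpha> = fst d \<and> [cdeg \<alpha> = snd d] (mod int m))"

definition rel :: "nat \<Rightarrow> nat \<Rightarrow> cpoly" where
  "rel p q = Xv 0 ^ (q - p) - Xv 1 * Xv 4 + Xv 2 * Xv 3"

definition in_ideal :: "nat \<Rightarrow> nat \<Rightarrow> cpoly \<Rightarrow> bool" where
  "in_ideal p q g \<longleftrightarrow> (\<exists>h. in_ring5 h \<and> g = h * rel p q)"

text \<open>Preimage in C[X0..X4] of the graded piece S_d of S = C[X0..X4]/(rel):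
  polynomials congruent modulo the ideal to a homogeneous polynomial of degree d.\<close>
definition Spre :: "nat \<Rightarrow> nat \<Rightarrow> nat \<Rightarrow> int \<times> int \<Rightarrow> cpoly set" where
  "Spre p q m d = {f. in_ring5 f \<and> (\<exists>g. homog p q m d g \<and> in_ideal p q (f - g))}"

text \<open>Preimage of S^G * Xi + S^G * Xj, where S^G = S_(0,0).\<close>
definition SG_span2 :: "nat \<Rightarrow> nat \<Rightarrow> nat \<Rightarrow> nat \<Rightarrow> nat \<Rightarrow> cpoly set" where
  "SG_span2 p q m i j = {f. in_ring5 f \<and> (\<exists>a b. a \<in> Spre p q m (0, 0) \<and> b \<in> Spre p q m (0, 0)
       \<and> in_ideal p q (f - (a * Xv i + b * Xv j)))}"

end

theory Submission
  imports Defs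
begin

lemma keys_add_nat: "Poly_Mapping.keys ((a::nat \<Rightarrow>\<^sub>0 nat) + b) = Poly_Mapping.keys a \<union> Poly_Mapping.keys b"
  by (auto simp: in_keys_iff lookup_add)

lemma wdeg_add: "wdeg p q (a + b) = wdeg p q a + wdeg p q b"
  by (simp add: wdeg_def lookup_add algebra_simps)

lemma cdeg_add: "cdeg (a + b) = cdeg a + cdeg b"
  by (simp add: cdeg_def lookup_add algebra_simps)

lemma wdeg_e: "wdeg p q (Poly_Mapping.single i n) =
   (if i = 0 then int n else if i = 1 \<or> i = 2 then - int p * int n else if i = 3 \<or> i = 4 then int q * int n else 0)"
  by (auto simp: wdeg_def lookup_single when_def)

lemma cdeg_e: "cdeg (Poly_Mapping.single i n) =
   (if i = 1 \<or> i = 2 then - int n else if i = 3 \<or> i = 4 then int n else 0)"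
  by (auto simp: cdeg_def lookup_single when_def)

lemma ring5_single: "Poly_Mapping.keys \<alpha> \<subseteq> {0..<5} \<Longrightarrow> in_ring5 (Poly_Mapping.single \<alpha> c)"
  by (simp add: in_ring5_def)

lemma ring5_0: "in_ring5 0" by (simp add: in_ring5_def)

lemma ring5_add: "in_ring5 f \<Longrightarrow> in_ring5 g \<Longrightarrow> in_ring5 (f + g)"
  unfolding in_ring5_def
proof
  fix \<alpha> assume A: "\<forall>\<alpha>\<in>Poly_Mapping.keys f. Poly_Mapping.keys \<alpha> \<subseteq> {0..<5}"
    "\<forall>\<alpha>\<in>Poly_Mapping.keys g. Poly_Mapping.keys \<alpha> \<subseteq> {0..<5}" and "\<alpha> \<in> Poly_Mapping.keys (f + g)"
  then have "\<alpha> \<in> Poly_Mapping.keys f \<or> \<alpha> \<in> Poly_Mapping.keys g" using keys_add[of f g] by auto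
  then show "Poly_Mapping.keys \<alpha> \<subseteq> {0..<5}" using A by auto
qed

lemma ring5_uminus: "in_ring5 f \<Longrightarrow> in_ring5 (- f)"
  unfolding in_ring5_def by simp

lemma ring5_diff: "in_ring5 f \<Longrightarrow> in_ring5 g \<Longrightarrow> in_ring5 (f - g)"
  using ring5_add[of f "- g"] ring5_uminus[of g] by simp

lemma ring5_mult: "in_ring5 f \<Longrightarrow> in_ring5 g \<Longrightarrow> in_ring5 (f * g)"
  unfolding in_ring5_def
proof
  fix \<gamma> assume A: "\<forall>\<alpha>\<in>Poly_Mapping.keys f. Poly_Mapping.keys \<alpha> \<subseteq> {0..<5}"
    "\<forall>\<alpha>\<in>Poly_Mapping.keys g. Poly_Mapping.keys \<alpha> \<subseteq> {0..<5}" and "\<gamma> \<in> Poly_Mapping.keys (f * g)"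
  then obtain a b where "\<gamma> = a + b" "a \<in> Poly_Mapping.keys f" "b \<in> Poly_Mapping.keys g"
    using keys_mult by blast
  then show "Poly_Mapping.keys \<gamma> \<subseteq> {0..<5}" using A by (simp add: keys_add_nat)
qed

lemma ring5_Xv: "i < 5 \<Longrightarrow> in_ring5 (Xv i)"
  by (simp add: Xv_def in_ring5_def)

lemma homog_ring5: "homog p q m d f \<Longrightarrow> in_ring5 f" by (simp add: homog_def)

lemma homog_single: "Poly_Mapping.keys \<alpha> \<subseteq> {0..<5} \<Longrightarrow> wdeg p q \<alpha> = fst d \<Longrightarrow>
   [cdeg \<alpha> = snd d] (mod int m) \<Longrightarrow> homog p q m d (Poly_Mapping.single \<alpha> c)"
  by (simp add: homog_def in_ring5_def)

lemma homog_0: "homog p q m d 0" by (simp add: homog_def in_ring5_def)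

lemma homog_add: "homog p q m d f \<Longrightarrow> homog p q m d g \<Longrightarrow> homog p q m d (f + g)"
  unfolding homog_def
proof (intro conjI ballI)
  assume A: "in_ring5 f \<and> (\<forall>\<alpha>\<in>Poly_Mapping.keys f. wdeg p q \<alpha> = fst d \<and> [cdeg \<alpha> = snd d] (mod int m))"
    "in_ring5 g \<and> (\<forall>\<alpha>\<in>Poly_Mapping.keys g. wdeg p q \<alpha> = fst d \<and> [cdeg \<alpha> = snd d] (mod int m))"
  then show "in_ring5 (f + g)" using ring5_add by blast
  fix \<alpha> assume "\<alpha> \<in> Poly_Mapping.keys (f + g)"
  then have "\<alpha> \<in> Poly_Mapping.keys f \<or> \<alpha> \<in> Poly_Mapping.keys g" using keys_add[of f g] by auto
  then show "wdeg p q \<alpha> = fst d" "[cdeg \<alpha> = snd d] (mod int m)" using A by auto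
qed

lemma homog_uminus: "homog p q m d f \<Longrightarrow> homog p q m d (- f)"
  unfolding homog_def using ring5_uminus by simp

lemma homog_mult: "homog p q m d1 f \<Longrightarrow> homog p q m d2 g \<Longrightarrow> homog p q m (fst d1 + fst d2, snd d1 + snd d2) (f * g)"
  unfolding homog_def
proof (intro conjI ballI)
  assume A: "in_ring5 f \<and> (\<forall>\<alpha>\<in>Poly_Mapping.keys f. wdeg p q \<alpha> = fst d1 \<and> [cdeg \<alpha> = snd d1] (mod int m))"
    "in_ring5 g \<and> (\<forall>\<alpha>\<in>Poly_Mapping.keys g. wdeg p q \<alpha> = fst d2 \<and> [cdeg \<alpha> = snd d2] (mod int m))"
  then show "in_ring5 (f * g)" using ring5_mult by blast
  fix \<gamma> assume "\<gamma> \<in> Poly_Mapping.keys (f * g)"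
  then obtain a b where "\<gamma> = a + b" "a \<in> Poly_Mapping.keys f" "b \<in> Poly_Mapping.keys g"
    using keys_mult by blast
  then show "wdeg p q \<gamma> = fst (fst d1 + fst d2, snd d1 + snd d2)"
     "[cdeg \<gamma> = snd (fst d1 + fst d2, snd d1 + snd d2)] (mod int m)"
    using A by (auto simp: wdeg_add cdeg_add intro: cong_add)
qed

lemma homog_X12: "i = 1 \<or> i = 2 \<Longrightarrow> homog p q m (- int p, - 1) (Xv i)"
  unfolding Xv_def by (rule homog_single) (auto simp: wdeg_e cdeg_e)

lemma homog_X34: "i = 3 \<or> i = 4 \<Longrightarrow> homog p q m (int q, 1) (Xv i)"
  unfolding Xv_def by (rule homog_single) (auto simp: wdeg_e cdeg_e)

lemma ideal_0: "in_ideal p q 0"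
  unfolding in_ideal_def using ring5_0 by force

lemma ideal_add: "in_ideal p q f \<Longrightarrow> in_ideal p q g \<Longrightarrow> in_ideal p q (f + g)"
proof -
  assume "in_ideal p q f" "in_ideal p q g"
  then obtain h1 h2 where "in_ring5 h1" "f = h1 * rel p q" "in_ring5 h2" "g = h2 * rel p q"
    unfolding in_ideal_def by blast
  then show ?thesis unfolding in_ideal_def
    by (intro exI[of _ "h1 + h2"]) (simp add: ring5_add distrib_right)
qed

lemma ideal_mult: "in_ideal p q f \<Longrightarrow> in_ring5 x \<Longrightarrow> in_ideal p q (f * x)"
proof -
  assume "in_ideal p q f" "in_ring5 x"
  then obtain h1 where "in_ring5 h1" "f = h1 * rel p q"
    unfolding in_ideal_def by blast
  then show ?thesis unfolding in_ideal_def using \<open>in_ring5 x\<close>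
    by (intro exI[of _ "h1 * x"]) (simp add: ring5_mult mult_ac)
qed

lemma ideal_rel: "in_ring5 h \<Longrightarrow> in_ideal p q (h * rel p q)"
  unfolding in_ideal_def by blast

lemma sum_single_expand: "(\<Sum>\<alpha>\<in>Poly_Mapping.keys g. Poly_Mapping.single \<alpha> (Poly_Mapping.lookup g \<alpha>)) = (g :: cpoly)"
proof (rule poly_mapping_eqI)
  fix k
  show "Poly_Mapping.lookup (\<Sum>\<alpha>\<in>Poly_Mapping.keys g. Poly_Mapping.single \<alpha> (Poly_Mapping.lookup g \<alpha>)) k = Poly_Mapping.lookup g k"
    by (simp add: lookup_sum lookup_single when_def in_keys_iff)
qed

lemma decomp:
  assumes "\<forall>\<alpha>\<in>Poly_Mapping.keys g. \<exists>a b h. homog p q m (0,0) a \<and> homog p q m (0,0) b \<and> in_ring5 h \<and>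
     Poly_Mapping.single \<alpha> (Poly_Mapping.lookup g \<alpha>) = a * Xv i + b * Xv j + h * rel p q"
  shows "\<exists>a b h. homog p q m (0,0) a \<and> homog p q m (0,0) b \<and> in_ring5 h \<and>
     (g::cpoly) = a * Xv i + b * Xv j + h * rel p q"
proof -
  have "K \<subseteq> Poly_Mapping.keys g \<Longrightarrow> \<exists>a b h. homog p q m (0,0) a \<and> homog p q m (0,0) b \<and> in_ring5 h \<and>
     (\<Sum>\<alpha>\<in>K. Poly_Mapping.single \<alpha> (Poly_Mapping.lookup g \<alpha>)) = a * Xv i + b * Xv j + h * rel p q" for K
  proof (induction K rule: infinite_finite_induct)
    case (infinite A)
    then show ?case using finite_subset[OF _ finite_keys] by blast
  next
    case empty
    then show ?case using homog_0 ring5_0 by fastforce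
  next
    case (insert x F)
    then obtain a b h where IH: "homog p q m (0,0) a" "homog p q m (0,0) b" "in_ring5 h"
      "(\<Sum>\<alpha>\<in>F. Poly_Mapping.single \<alpha> (Poly_Mapping.lookup g \<alpha>)) = a * Xv i + b * Xv j + h * rel p q" by auto
    obtain a' b' h' where N: "homog p q m (0,0) a'" "homog p q m (0,0) b'" "in_ring5 h'"
      "Poly_Mapping.single x (Poly_Mapping.lookup g x) = a' * Xv i + b' * Xv j + h' * rel p q"
      using assms insert by blast
    show ?case
      apply (rule exI[of _ "a + a'"], rule exI[of _ "b + b'"], rule exI[of _ "h + h'"])
    proof (intro conjI)
      show "homog p q m (0,0) (a + a')" "homog p q m (0,0) (b + b')" "in_ring5 (h + h')"
        using IH N by (auto intro: homog_add ring5_add)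
      have "(\<Sum>\<alpha>\<in>insert x F. Poly_Mapping.single \<alpha> (Poly_Mapping.lookup g \<alpha>))
          = Poly_Mapping.single x (Poly_Mapping.lookup g x) + (\<Sum>\<alpha>\<in>F. Poly_Mapping.single \<alpha> (Poly_Mapping.lookup g \<alpha>))"
        using insert.hyps by (rule sum.insert)
      also have "\<dots> = (a' * Xv i + b' * Xv j + h' * rel p q) + (a * Xv i + b * Xv j + h * rel p q)"
        by (simp only: IH(4) N(4))
      also have "\<dots> = (a + a') * Xv i + (b + b') * Xv j + (h + h') * rel p q"
        by (simp only: distrib_right add_ac)
      finally show "(\<Sum>\<alpha>\<in>insert x F. Poly_Mapping.single \<alpha> (Poly_Mapping.lookup g \<alpha>)) = (a + a') * Xv i + (b + b') * Xv j + (h + h') * rel p q" .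
    qed
  qed
  from this[of "Poly_Mapping.keys g"] show ?thesis by (simp add: sum_single_expand)
qed


lemma homog_eq: "homog p q m d f \<Longrightarrow> d = d' \<Longrightarrow> homog p q m d' f" by simp

lemma split_off: "n \<le> Poly_Mapping.lookup \<alpha> i \<Longrightarrow>
   \<alpha> = (\<alpha> - Poly_Mapping.single i n) + Poly_Mapping.single i (n::nat)"
  by (rule poly_mapping_eqI) (auto simp: lookup_add lookup_minus lookup_single when_def)

lemma homog_quot:
  assumes "Poly_Mapping.keys \<alpha> \<subseteq> {0..<5}" "wdeg p q \<alpha> = fst d" "[cdeg \<alpha> = snd d] (mod int m)"
    "\<alpha> = \<beta> + \<gamma>"
  shows "homog p q m (fst d - wdeg p q \<gamma>, snd d - cdeg \<gamma>) (Poly_Mapping.single \<beta> c)"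
proof (rule homog_single)
  show "Poly_Mapping.keys \<beta> \<subseteq> {0..<5}" using assms(1,4) keys_add_nat by blast
  show "wdeg p q \<beta> = fst (fst d - wdeg p q \<gamma>, snd d - cdeg \<gamma>)" using assms(2,4) by (simp add: wdeg_add)
  have "[cdeg \<alpha> - cdeg \<gamma> = snd d - cdeg \<gamma>] (mod int m)" using assms(3) by (simp add: cong_diff)
  then show "[cdeg \<beta> = snd (fst d - wdeg p q \<gamma>, snd d - cdeg \<gamma>)] (mod int m)" using assms(4) by (simp add: cdeg_add)
qed

lemma single_mult_X: "Poly_Mapping.single (\<beta> + Poly_Mapping.single i 1) c = Poly_Mapping.single \<beta> c * Xv i"
  by (simp add: Xv_def mult_single)

lemma X0_pow: "Xv 0 ^ n = Poly_Mapping.single (Poly_Mapping.single 0 n) 1"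
  by (induction n) (simp_all add: Xv_def mult_single flip: single_add)


lemma mono_i:
  assumes g: "homog p q m (- int p, - 1) g" and a: "\<alpha> \<in> Poly_Mapping.keys g" and p: "0 < p"
  shows "\<exists>a b h. homog p q m (0,0) a \<and> homog p q m (0,0) b \<and> in_ring5 h \<and>
     Poly_Mapping.single \<alpha> (Poly_Mapping.lookup g \<alpha>) = a * Xv 1 + b * Xv 2 + h * rel p q"
proof -
  define c where "c = Poly_Mapping.lookup g \<alpha>"
  have K: "Poly_Mapping.keys \<alpha> \<subseteq> {0..<5}" using g a by (auto simp: homog_def in_ring5_def)
  have W: "wdeg p q \<alpha> = fst (- int p, - 1::int)" "[cdeg \<alpha> = snd (- int p, - 1::int)] (mod int m)"
    using g a by (auto simp: homog_def)
  have "1 \<le> Poly_Mapping.lookup \<alpha> 1 \<or> 1 \<le> Poly_Mapping.lookup \<alpha> 2"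
  proof (rule ccontr)
    assume "\<not> ?thesis"
    then have "Poly_Mapping.lookup \<alpha> 1 = 0" "Poly_Mapping.lookup \<alpha> 2 = 0" by auto
    then have "wdeg p q \<alpha> \<ge> 0" by (simp add: wdeg_def)
    then show False using W p by simp
  qed
  then obtain i where i: "i = 1 \<or> i = 2" "1 \<le> Poly_Mapping.lookup \<alpha> i" by blast
  define \<beta> where "\<beta> = \<alpha> - Poly_Mapping.single i 1"
  have E: "\<alpha> = \<beta> + Poly_Mapping.single i 1" unfolding \<beta>_def by (rule split_off[OF i(2)])
  have H: "homog p q m (0,0) (Poly_Mapping.single \<beta> c)"
    using homog_quot[OF K W E, of c] i(1) by (auto simp: wdeg_e cdeg_e elim: homog_eq)
  have S: "Poly_Mapping.single \<alpha> c = Poly_Mapping.single \<beta> c * Xv i"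
    using E single_mult_X by metis
  show ?thesis
  proof (cases "i = 1")
    case True
    then have S': "Poly_Mapping.single \<alpha> c = Poly_Mapping.single \<beta> c * Xv 1" using S by simp
    show ?thesis unfolding c_def[symmetric]
      by (rule exI[of _ "Poly_Mapping.single \<beta> c"], rule exI[of _ 0], rule exI[of _ 0]) (use H S' ring5_0 homog_0 in auto)
  next
    case False
    then have "i = 2" using i by auto
    then have S': "Poly_Mapping.single \<alpha> c = Poly_Mapping.single \<beta> c * Xv 2" using S by simp
    show ?thesis unfolding c_def[symmetric]
      by (rule exI[of _ 0], rule exI[of _ "Poly_Mapping.single \<beta> c"], rule exI[of _ 0]) (use H S' ring5_0 homog_0 in auto)
  qed
qed


lemma mono_ii:
  assumes g: "homog p q m (int q, 1) g" and a: "\<alpha> \<in> Poly_Mapping.keys g" and pq: "p \<le> q"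
  shows "\<exists>a b h. homog p q m (0,0) a \<and> homog p q m (0,0) b \<and> in_ring5 h \<and>
     Poly_Mapping.single \<alpha> (Poly_Mapping.lookup g \<alpha>) = a * Xv 3 + b * Xv 4 + h * rel p q"
proof -
  define c where "c = Poly_Mapping.lookup g \<alpha>"
  have K: "Poly_Mapping.keys \<alpha> \<subseteq> {0..<5}" using g a by (auto simp: homog_def in_ring5_def)
  have W: "wdeg p q \<alpha> = fst (int q, 1::int)" "[cdeg \<alpha> = snd (int q, 1::int)] (mod int m)"
    using g a by (auto simp: homog_def)
  show ?thesis
  proof (cases "1 \<le> Poly_Mapping.lookup \<alpha> 3 \<or> 1 \<le> Poly_Mapping.lookup \<alpha> 4")
    case True
    then obtain i where i: "i = 3 \<or> i = 4" "1 \<le> Poly_Mapping.lookup \<alpha> i" by blast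
    define \<beta> where "\<beta> = \<alpha> - Poly_Mapping.single i 1"
    have E: "\<alpha> = \<beta> + Poly_Mapping.single i 1" unfolding \<beta>_def by (rule split_off[OF i(2)])
    have H: "homog p q m (0,0) (Poly_Mapping.single \<beta> c)"
      using homog_quot[OF K W E, of c] i(1) by (auto simp: wdeg_e cdeg_e elim: homog_eq)
    have S: "Poly_Mapping.single \<alpha> c = Poly_Mapping.single \<beta> c * Xv i"
      using E single_mult_X by metis
    show ?thesis
    proof (cases "i = 3")
      case True
      then have S': "Poly_Mapping.single \<alpha> c = Poly_Mapping.single \<beta> c * Xv 3" using S by simp
      show ?thesis unfolding c_def[symmetric]
        by (rule exI[of _ "Poly_Mapping.single \<beta> c"], rule exI[of _ 0], rule exI[of _ 0]) (use H S' ring5_0 homog_0 in auto)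
    next
      case False
      then have "i = 4" using i by auto
      then have S': "Poly_Mapping.single \<alpha> c = Poly_Mapping.single \<beta> c * Xv 4" using S by simp
      show ?thesis unfolding c_def[symmetric]
        by (rule exI[of _ 0], rule exI[of _ "Poly_Mapping.single \<beta> c"], rule exI[of _ 0]) (use H S' ring5_0 homog_0 in auto)
    qed
  next
    case False
    then have "Poly_Mapping.lookup \<alpha> 3 = 0" "Poly_Mapping.lookup \<alpha> 4 = 0" by auto
    then have E0: "int (Poly_Mapping.lookup \<alpha> 0) = int q + int p * (int (Poly_Mapping.lookup \<alpha> 1) + int (Poly_Mapping.lookup \<alpha> 2))" using W
      by (simp add: wdeg_def)
    have "0 \<le> int p * (int (Poly_Mapping.lookup \<alpha> 1) + int (Poly_Mapping.lookup \<alpha> 2))" by simp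
    then have "int (Poly_Mapping.lookup \<alpha> 0) \<ge> int q" using E0 by linarith
    then have L: "q - p \<le> Poly_Mapping.lookup \<alpha> 0" by simp
    define \<beta> where "\<beta> = \<alpha> - Poly_Mapping.single 0 (q - p)"
    have E: "\<alpha> = \<beta> + Poly_Mapping.single 0 (q - p)" unfolding \<beta>_def by (rule split_off[OF L])
    have H0: "homog p q m (int p, 1) (Poly_Mapping.single \<beta> c)"
      using homog_quot[OF K W E, of c] pq by (auto simp: wdeg_e cdeg_e of_nat_diff elim: homog_eq)
    have H1: "homog p q m (0,0) (Poly_Mapping.single \<beta> c * Xv 1)"
      using homog_mult[OF H0 homog_X12[of 1]] by (auto elim: homog_eq)
    have H2: "homog p q m (0,0) (- (Poly_Mapping.single \<beta> c * Xv 2))"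
      using homog_uminus[OF homog_mult[OF H0 homog_X12[of 2]]] by (auto elim: homog_eq)
    have R: "in_ring5 (Poly_Mapping.single \<beta> c)" using H0 homog_ring5 by blast
    have "Poly_Mapping.single \<alpha> c = Poly_Mapping.single \<beta> c * Xv 0 ^ (q - p)"
      using E by (simp add: X0_pow mult_single)
    also have "\<dots> = (- (Poly_Mapping.single \<beta> c * Xv 2)) * Xv 3 + (Poly_Mapping.single \<beta> c * Xv 1) * Xv 4
        + Poly_Mapping.single \<beta> c * rel p q"
      by (simp add: rel_def algebra_simps)
    finally show ?thesis using H1 H2 R unfolding c_def[symmetric] by blast
  qed
qed


lemma Spre_homog: "homog p q m (0,0) a \<Longrightarrow> a \<in> Spre p q m (0,0)"
  unfolding Spre_def using homog_ring5 ideal_0 by fastforce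

lemma sub_dir:
  assumes "\<forall>g. homog p q m d g \<longrightarrow> (\<forall>\<alpha>\<in>Poly_Mapping.keys g. \<exists>a b h. homog p q m (0,0) a \<and> homog p q m (0,0) b \<and> in_ring5 h \<and>
     Poly_Mapping.single \<alpha> (Poly_Mapping.lookup g \<alpha>) = a * Xv i + b * Xv j + h * rel p q)"
  shows "Spre p q m d \<subseteq> SG_span2 p q m i j"
proof
  fix f assume "f \<in> Spre p q m d"
  then obtain g where f: "in_ring5 f" "homog p q m d g" "in_ideal p q (f - g)" unfolding Spre_def by blast
  obtain a b h where D: "homog p q m (0,0) a" "homog p q m (0,0) b" "in_ring5 h"
     "g = a * Xv i + b * Xv j + h * rel p q"
    using decomp[of g p q m i j] assms f(2) by blast
  have eq: "f - (a * Xv i + b * Xv j) = (f - g) + h * rel p q" using D(4) by simp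
  have "in_ideal p q (f - (a * Xv i + b * Xv j))" unfolding eq by (rule ideal_add[OF f(3) ideal_rel[OF D(3)]])
  then show "f \<in> SG_span2 p q m i j" unfolding SG_span2_def using f(1) Spre_homog D(1,2) by blast
qed

lemma sup_dir:
  assumes "homog p q m d (Xv i)" "homog p q m d (Xv j)" "i < 5" "j < 5"
  shows "SG_span2 p q m i j \<subseteq> Spre p q m d"
proof
  fix f assume "f \<in> SG_span2 p q m i j"
  then obtain a b where f: "in_ring5 f" "a \<in> Spre p q m (0,0)" "b \<in> Spre p q m (0,0)"
    "in_ideal p q (f - (a * Xv i + b * Xv j))" unfolding SG_span2_def by blast
  obtain ga where A: "homog p q m (0,0) ga" "in_ideal p q (a - ga)" using f(2) unfolding Spre_def by blast
  obtain gb where B: "homog p q m (0,0) gb" "in_ideal p q (b - gb)" using f(3) unfolding Spre_def by blast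
  have H: "homog p q m d (ga * Xv i + gb * Xv j)"
    using homog_add[OF homog_mult[OF A(1) assms(1)] homog_mult[OF B(1) assms(2)]] by (auto elim: homog_eq)
  have eq: "f - (ga * Xv i + gb * Xv j) = (f - (a * Xv i + b * Xv j)) + (a - ga) * Xv i + (b - gb) * Xv j"
    by (simp add: algebra_simps)
  have "in_ideal p q (f - (ga * Xv i + gb * Xv j))" unfolding eq
    using f(4) A(2) B(2) ring5_Xv assms(3,4) by (intro ideal_add ideal_mult) auto
  then show "f \<in> Spre p q m d" unfolding Spre_def using f(1) H by auto
qed

theorem lemma4p4:
  fixes p q m :: nat
  assumes "0 < p" and "0 < q" and "coprime p q" and "p \<le> q" and "0 < m"
  shows "Spre p q m (- int p, - 1) = SG_span2 p q m 1 2 \<and>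
         Spre p q m (int q, 1) = SG_span2 p q m 3 4"
proof
  show "Spre p q m (- int p, - 1) = SG_span2 p q m 1 2"
  proof
    show "Spre p q m (- int p, - 1) \<subseteq> SG_span2 p q m 1 2"
      by (rule sub_dir) (use mono_i assms(1) in blast)
    show "SG_span2 p q m 1 2 \<subseteq> Spre p q m (- int p, - 1)"
      by (rule sup_dir) (auto intro: homog_X12)
  qed
  show "Spre p q m (int q, 1) = SG_span2 p q m 3 4"
  proof
    show "Spre p q m (int q, 1) \<subseteq> SG_span2 p q m 3 4"
      by (rule sub_dir) (use mono_ii assms(4) in blast)
    show "SG_span2 p q m 3 4 \<subseteq> Spre p q m (int q, 1)"
      by (rule sup_dir) (auto intro: homog_X34)
  qed
qed



end
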